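(* Let $X$ be a set of reals such that for every $k\ge1$ the power $X^k$ satisfies $\mathrm{Split}(\Omega,\Lambda)$. Then $X$ satisfies $\mathrm{Split}(\Omega,\Omega)$. Analogously, if every $X^k$ satisfies $\mathrm{Split}(C_\Omega,C_\Lambda)$ then $X$ satisfies $\mathrm{Split}(C_\Omega,C_\Omega)$, and if every $X^k$ satisfies $\mathrm{Split}(B_\Omega,B_\Lambda)$ then $X$ satisfies $\mathrm{Split}(B_\Omega,B_\Omega)$.
   Context: A set of reals is an infinite topological space homeomorphic to a subset of $\mathbb R$; $X^k$ carries the product topology. A cover of a space $Z$ is a family $\mathcal U$ of subsets of $Z$ with $\bigcup\mathcal U=Z$ such that $Z\not\subseteq U$ for all $U\in\mathcal U$; it is a large cover if every point lies in infinitely many members, and an $\omega$-cover if every finite subset of $Z$ is contained in some member. $\Lambda,\Omega$ are the collections of open large covers and open $\omega$-covers of the space; $B_\Lambda,B_\Omega$ the collections of countable such covers by Borel sets; $C_\Lambda,C_\Omega$ the collections of countable such covers by clopen sets. A space satisfies $\mathrm{Split}(\mathfrak U,\mathfrak V)$ if every $\mathcal U\in\mathfrak U$ can be partitioned into two disjoint subfamilies each containing a subfamily belonging to $\mathfrak V$. *)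

theory Defs
  imports "HOL-Analysis.Analysis"
begin

definition is_cover :: "'a topology \<Rightarrow> 'a set set \<Rightarrow> bool" where
  "is_cover T \<U> \<longleftrightarrow> (\<forall>U\<in>\<U>. U \<subseteq> topspace T) \<and> \<Union>\<U> = topspace T
     \<and> (\<forall>U\<in>\<U>. \<not> topspace T \<subseteq> U)"

definition large_cover :: "'a topology \<Rightarrow> 'a set set \<Rightarrow> bool" where
  "large_cover T \<U> \<longleftrightarrow> is_cover T \<U> \<and> (\<forall>x\<in>topspace T. infinite {U\<in>\<U>. x \<in> U})"

definition omega_cover :: "'a topology \<Rightarrow> 'a set set \<Rightarrow> bool" where
  "omega_cover T \<U> \<longleftrightarrow> is_cover T \<U> \<and>
     (\<forall>F. finite F \<and> F \<subseteq> topspace T \<longrightarrow> (\<exists>U\<in>\<U>. F \<subseteq> U))"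

definition borel_sets_of :: "'a topology \<Rightarrow> 'a set set" where
  "borel_sets_of T = sigma_sets (topspace T) {U. openin T U}"

definition Lambda :: "'a topology \<Rightarrow> 'a set set \<Rightarrow> bool" where
  "Lambda T \<U> \<longleftrightarrow> large_cover T \<U> \<and> (\<forall>U\<in>\<U>. openin T U)"

definition Omega :: "'a topology \<Rightarrow> 'a set set \<Rightarrow> bool" where
  "Omega T \<U> \<longleftrightarrow> omega_cover T \<U> \<and> (\<forall>U\<in>\<U>. openin T U)"

definition B_Lambda :: "'a topology \<Rightarrow> 'a set set \<Rightarrow> bool" where
  "B_Lambda T \<U> \<longleftrightarrow> large_cover T \<U> \<and> countable \<U> \<and> \<U> \<subseteq> borel_sets_of T"

definition B_Omega :: "'a topology \<Rightarrow> 'a set set \<Rightarrow> bool" where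
  "B_Omega T \<U> \<longleftrightarrow> omega_cover T \<U> \<and> countable \<U> \<and> \<U> \<subseteq> borel_sets_of T"

definition C_Lambda :: "'a topology \<Rightarrow> 'a set set \<Rightarrow> bool" where
  "C_Lambda T \<U> \<longleftrightarrow> large_cover T \<U> \<and> countable \<U> \<and>
     (\<forall>U\<in>\<U>. openin T U \<and> closedin T U)"

definition C_Omega :: "'a topology \<Rightarrow> 'a set set \<Rightarrow> bool" where
  "C_Omega T \<U> \<longleftrightarrow> omega_cover T \<U> \<and> countable \<U> \<and>
     (\<forall>U\<in>\<U>. openin T U \<and> closedin T U)"

definition Split ::
  "('a topology \<Rightarrow> 'a set set \<Rightarrow> bool) \<Rightarrow> ('a topology \<Rightarrow> 'a set set \<Rightarrow> bool) \<Rightarrow> 'a topology \<Rightarrow> bool" where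
  "Split A B T \<longleftrightarrow> (\<forall>\<U>. A T \<U> \<longrightarrow>
     (\<exists>\<U>1 \<U>2. \<U>1 \<union> \<U>2 = \<U> \<and> \<U>1 \<inter> \<U>2 = {} \<and>
        (\<exists>\<V>\<subseteq>\<U>1. B T \<V>) \<and> (\<exists>\<V>\<subseteq>\<U>2. B T \<V>)))"

definition real_subspace :: "real set \<Rightarrow> real topology" where
  "real_subspace X = subtopology euclideanreal X"

definition power_space :: "real set \<Rightarrow> nat \<Rightarrow> (nat \<Rightarrow> real) topology" where
  "power_space X k = product_topology (\<lambda>i. subtopology euclideanreal X) {..<k}"

end

theory Submission
  imports Defs
begin

definition wc :: "'a set \<Rightarrow> 'a set set \<Rightarrow> bool" where
  "wc X D \<longleftrightarrow> (\<forall>F. finite F \<and> F \<subseteq> X \<longrightarrow> (\<exists>U\<in>D. F \<subseteq> U))"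

definition kcov :: "'a set \<Rightarrow> nat \<Rightarrow> 'a set set \<Rightarrow> bool" where
  "kcov X k D \<longleftrightarrow> (\<forall>F. finite F \<and> F \<subseteq> X \<and> card F \<le> k \<longrightarrow> (\<exists>U\<in>D. F \<subseteq> U))"

definition pw :: "nat \<Rightarrow> 'a set \<Rightarrow> (nat \<Rightarrow> 'a) set" where
  "pw k U = PiE {..<k} (\<lambda>_. U)"

lemma wc_split:
  assumes "wc X (D \<union> E)" shows "wc X D \<or> wc X E"
proof (rule ccontr)
  assume "\<not> (wc X D \<or> wc X E)"
  then have nD: "\<not> wc X D" and nE: "\<not> wc X E" by simp_all
  from nD obtain F1 where F1: "finite F1" "F1 \<subseteq> X" "\<forall>U\<in>D. \<not> F1 \<subseteq> U"
    unfolding wc_def by auto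
  from nE obtain F2 where F2: "finite F2" "F2 \<subseteq> X" "\<forall>U\<in>E. \<not> F2 \<subseteq> U"
    unfolding wc_def by auto
  have "finite (F1 \<union> F2) \<and> F1 \<union> F2 \<subseteq> X" using F1 F2 by simp
  then obtain U where "U \<in> D \<union> E" "F1 \<union> F2 \<subseteq> U" using assms unfolding wc_def
    by blast
  then show False using F1 F2 by auto
qed

lemma abstract:
  assumes split: "\<And>C k. P C \<Longrightarrow> k \<ge> 1 \<Longrightarrow> \<exists>D E. D \<union> E = C \<and> D \<inter> E = {} \<and> kcov X k D \<and> kcov X k E"
    and her: "\<And>C D. P C \<Longrightarrow> D \<subseteq> C \<Longrightarrow> wc X D \<Longrightarrow> P D"
    and wcP: "\<And>C. P C \<Longrightarrow> wc X C"
    and PU: "P U"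
  shows "\<exists>A B. A \<union> B = U \<and> A \<inter> B = {} \<and> P A \<and> P B"
proof -
  have step: "\<exists>p. fst p \<union> snd p = C \<and> fst p \<inter> snd p = {} \<and> kcov X k (fst p) \<and> P (snd p)"
    if PCk: "P C" "k \<ge> 1" for C k
  proof -
    obtain D E where DE: "D \<union> E = C" "D \<inter> E = {}" "kcov X k D" "kcov X k E"
      using split[OF PCk] by blast
    have "wc X (D \<union> E)" using wcP[OF PCk(1)] DE(1) by simp
    then have "wc X D \<or> wc X E" by (rule wc_split)
    then show ?thesis
    proof
      assume "wc X D" then have "P D" using her[OF PCk(1), of D] DE by blast
      then show ?thesis using DE by (intro exI[of _ "(E, D)"]) auto
    next
      assume "wc X E" then have "P E" using her[OF PCk(1), of E] DE by blast
      then show ?thesis using DE by (intro exI[of _ "(D, E)"]) auto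
    qed
  qed
  define st where "st k C = (SOME p. fst p \<union> snd p = C \<and> fst p \<inter> snd p = {} \<and> kcov X k (fst p) \<and> P (snd p))" for k C
  have st: "fst (st k C) \<union> snd (st k C) = C \<and> fst (st k C) \<inter> snd (st k C) = {} \<and> kcov X k (fst (st k C)) \<and> P (snd (st k C))"
    if "P C" "k \<ge> 1" for C k
    unfolding st_def by (rule someI_ex[OF step[OF that]])
  define Cs where "Cs = rec_nat U (\<lambda>n C. snd (st (Suc n) C))"
  have Cs0: "Cs 0 = U" and CsS: "\<And>n. Cs (Suc n) = snd (st (Suc n) (Cs n))" by (simp_all add: Cs_def)
  define Ds where "Ds n = fst (st (Suc n) (Cs n))" for n
  have PC: "P (Cs n)" for n
  proof (induction n)
    case 0 then show ?case using PU Cs0 by simp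
  next
    case (Suc n) then show ?case using st[OF Suc, of "Suc n"] CsS[of n] by simp
  qed
  have DsC: "Ds n \<union> Cs (Suc n) = Cs n" "Ds n \<inter> Cs (Suc n) = {}" "kcov X (Suc n) (Ds n)" for n
    using st[OF PC[of n], of "Suc n"] CsS[of n] unfolding Ds_def by auto
  have mono: "Cs m \<subseteq> Cs n" if "n \<le> m" for m n
    using that
  proof (induction rule: dec_induct)
    case base then show ?case by simp
  next
    case (step m) then show ?case using DsC(1)[of m] by blast
  qed
  have DsU: "Ds n \<subseteq> U" for n
  proof -
    have "Cs n \<subseteq> U" using mono[of 0 n] Cs0 by simp
    then show ?thesis using DsC(1)[of n] by blast
  qed
  have disj: "Ds n \<inter> Ds m = {}" if "n < m" for n m
  proof -
    have "Ds m \<subseteq> Cs (Suc n)" using DsC(1)[of m] mono[of "Suc n" m] that by auto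
    then show ?thesis using DsC(2)[of n] by blast
  qed
  define A where "A = (\<Union>n\<in>{n. even n}. Ds n)"
  define B where "B = U - A"
  have AU: "A \<subseteq> U" using DsU unfolding A_def by blast
  have DB: "Ds n \<subseteq> B" if "odd n" for n
  proof -
    have "Ds n \<inter> Ds m = {}" if "even m" for m
    proof -
      have "n \<noteq> m" using \<open>odd n\<close> that by auto
      then have "n < m \<or> m < n" by linarith
      then show ?thesis using disj[of n m] disj[of m n] by blast
    qed
    then show ?thesis unfolding B_def A_def using DsU[of n] by blast
  qed
  have "wc X A" unfolding wc_def
  proof (intro allI impI)
    fix F assume F: "finite F \<and> F \<subseteq> X"
    have "card F \<le> Suc (2 * card F)" by simp
    then obtain V where "V \<in> Ds (2 * card F)" "F \<subseteq> V" using DsC(3)[of "2 * card F"] F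
      unfolding kcov_def by blast
    moreover have "Ds (2 * card F) \<subseteq> A" unfolding A_def by (intro UN_upper) auto
    ultimately show "\<exists>U\<in>A. F \<subseteq> U" by blast
  qed
  moreover have "wc X B" unfolding wc_def
  proof (intro allI impI)
    fix F assume F: "finite F \<and> F \<subseteq> X"
    have "card F \<le> Suc (Suc (2 * card F))" by simp
    then obtain V where "V \<in> Ds (Suc (2 * card F))" "F \<subseteq> V" using DsC(3)[of "Suc (2 * card F)"] F
      unfolding kcov_def by blast
    then show "\<exists>U\<in>B. F \<subseteq> U" using DB[of "Suc (2 * card F)"] by auto
  qed
  moreover have "B \<subseteq> U" unfolding B_def by blast
  ultimately have "P A" "P B" using her[OF PU AU] her[OF PU, of B] by simp_all
  moreover have "A \<union> B = U" "A \<inter> B = {}" using AU unfolding B_def by auto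
  ultimately show ?thesis by blast
qed


lemma topspace_rs[simp]: "topspace (real_subspace X) = X"
  by (simp add: real_subspace_def)

lemma topspace_ps[simp]: "topspace (power_space X k) = PiE {..<k} (\<lambda>_. X)"
  by (simp add: power_space_def)

lemma kcov_from:
  assumes LC: "large_cover (power_space X k) V" and VD: "V \<subseteq> pw k ` D" and k: "k \<ge> 1" and X: "X \<noteq> {}"
  shows "kcov X k D"
proof -
  have main: "\<exists>U\<in>D. F \<subseteq> U" if F: "finite F" "F \<subseteq> X" "card F \<le> k" "F \<noteq> {}" for F
  proof -
    define xs where "xs = sorted_list_of_set F"
    have xs: "set xs = F" "length xs = card F" using F by (simp_all add: xs_def)
    have ne: "xs \<noteq> []" using xs F by auto
    define t where "t = (\<lambda>i. if i < k then (if i < length xs then xs!i else xs!0) else undefined)"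
    have "xs ! i \<in> X" if "i < length xs" for i using that xs F nth_mem by blast
    moreover have "xs ! 0 \<in> X" using ne xs F nth_mem by blast
    ultimately have "t \<in> PiE {..<k} (\<lambda>_. X)" unfolding t_def by (auto simp: PiE_iff extensional_def)
    then have "t \<in> \<Union>V" using LC unfolding large_cover_def is_cover_def by simp
    then obtain W where "W \<in> V" "t \<in> W" by blast
    then obtain U where U: "U \<in> D" "t \<in> pw k U" using VD by blast
    have "F \<subseteq> U"
    proof
      fix y assume "y \<in> F"
      then obtain j where j: "j < length xs" "xs!j = y" using xs by (metis in_set_conv_nth)
      then have "j < k" using xs F by simp
      then have "t j \<in> U" using U(2) by (auto simp: pw_def PiE_iff)
      then show "y \<in> U" using j \<open>j<k\<close> unfolding t_def by simp
    qed
    then show ?thesis using U(1) by blast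
  qed
  show ?thesis unfolding kcov_def
  proof (intro allI impI)
    fix F assume F: "finite F \<and> F \<subseteq> X \<and> card F \<le> k"
    show "\<exists>U\<in>D. F \<subseteq> U"
    proof (cases "F = {}")
      case True
      obtain x where "x \<in> X" using X by blast
      then obtain U where "U\<in>D" "{x} \<subseteq> U" using main[of "{x}"] k by auto
      then show ?thesis using True by blast
    next
      case False then show ?thesis using main F by blast
    qed
  qed
qed

lemma omega_pw:
  assumes OC: "omega_cover (real_subspace X) C" and k: "k \<ge> 1"
  shows "omega_cover (power_space X k) (pw k ` C)"
proof -
  have sub: "U \<subseteq> X" if "U\<in>C" for U using OC that unfolding omega_cover_def is_cover_def by simp
  have nsub: "\<not> X \<subseteq> U" if "U\<in>C" for U using OC that unfolding omega_cover_def is_cover_def by simp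
  have om: "\<exists>U\<in>C. F \<subseteq> U" if "finite F" "F \<subseteq> X" for F
    using OC that unfolding omega_cover_def by simp
  have cov: "\<exists>U\<in>C. G \<subseteq> pw k U" if G: "finite G" "G \<subseteq> PiE {..<k} (\<lambda>_. X)" for G
  proof -
    define F where "F = (\<Union>t\<in>G. t ` {..<k})"
    have "finite F" using G unfolding F_def by auto
    moreover have "F \<subseteq> X" using G unfolding F_def by (force simp: PiE_iff)
    ultimately obtain U where "U\<in>C" "F \<subseteq> U" using om by blast
    moreover have "G \<subseteq> pw k U" using G \<open>F\<subseteq>U\<close> unfolding F_def pw_def by (force simp: PiE_iff)
    ultimately show ?thesis by blast
  qed
  have c1: "\<forall>W\<in>pw k ` C. W \<subseteq> topspace (power_space X k)"
    using sub by (force simp: pw_def PiE_iff)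
  have c2: "\<forall>W\<in>pw k ` C. \<not> topspace (power_space X k) \<subseteq> W"
  proof
    fix W assume "W \<in> pw k ` C" then obtain U where U: "U\<in>C" "W = pw k U" by blast
    show "\<not> topspace (power_space X k) \<subseteq> W"
    proof
      assume a: "topspace (power_space X k) \<subseteq> W"
      have "X \<subseteq> U"
      proof
        fix x assume "x\<in>X"
        define t where "t = (\<lambda>i::nat. if i<k then x else undefined)"
        have "t \<in> topspace (power_space X k)" using \<open>x\<in>X\<close> by (auto simp: t_def PiE_iff extensional_def)
        then have "t \<in> pw k U" using a U by blast
        then have "t 0 \<in> U" using k by (auto simp: pw_def PiE_iff)
        then show "x \<in> U" using k by (simp add: t_def)
      qed
      then show False using nsub U by blast
    qed
  qed
  have c3: "\<Union>(pw k ` C) = topspace (power_space X k)"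
  proof
    show "\<Union>(pw k ` C) \<subseteq> topspace (power_space X k)" using c1 by blast
    show "topspace (power_space X k) \<subseteq> \<Union>(pw k ` C)"
    proof
      fix t assume "t \<in> topspace (power_space X k)"
      then obtain U where "U\<in>C" "{t} \<subseteq> pw k U" using cov[of "{t}"] by auto
      then show "t \<in> \<Union>(pw k ` C)" by blast
    qed
  qed
  have c4: "\<forall>G. finite G \<and> G \<subseteq> topspace (power_space X k) \<longrightarrow> (\<exists>W\<in>pw k ` C. G \<subseteq> W)"
    using cov by auto
  show ?thesis unfolding omega_cover_def is_cover_def using c1 c2 c3 c4 by blast
qed

lemma omega_her:
  assumes OC: "omega_cover (real_subspace X) C" and DC: "D \<subseteq> C" and W: "wc X D"
  shows "omega_cover (real_subspace X) D"
proof -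
  have sub: "\<forall>U\<in>D. U \<subseteq> X" "\<forall>U\<in>D. \<not> X \<subseteq> U" using OC DC unfolding omega_cover_def is_cover_def by auto
  have "X \<subseteq> \<Union>D"
  proof
    fix x assume "x \<in> X"
    then have "finite {x} \<and> {x} \<subseteq> X" by simp
    then obtain U where "U \<in> D" "{x} \<subseteq> U" using W unfolding wc_def by blast
    then show "x \<in> \<Union>D" by blast
  qed
  then have "\<Union>D = X" using sub by blast
  then show ?thesis using sub W unfolding omega_cover_def is_cover_def wc_def by simp
qed

lemma omega_wc: "omega_cover (real_subspace X) C \<Longrightarrow> wc X C"
  by (simp add: omega_cover_def wc_def)

lemma preimage_sigma:
  assumes f: "continuous_map T S f" and A: "A \<in> sigma_sets (topspace S) {U. openin S U}"
  shows "{x \<in> topspace T. f x \<in> A} \<in> sigma_sets (topspace T) {U. openin T U}"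
  using A
proof induct
  case (Basic a)
  then have "openin T {x \<in> topspace T. f x \<in> a}" using f openin_continuous_map_preimage by blast
  then show ?case by (intro sigma_sets.Basic) simp
next
  case Empty
  then show ?case by (simp add: sigma_sets.Empty)
next
  case (Compl a)
  have "{x \<in> topspace T. f x \<in> topspace S - a} = topspace T - {x \<in> topspace T. f x \<in> a}"
    using f unfolding continuous_map by auto
  moreover have "topspace T - {x \<in> topspace T. f x \<in> a} \<in> sigma_sets (topspace T) {U. openin T U}"
    by (rule sigma_sets.Compl) (rule Compl(2))
  ultimately show ?case by simp
next
  case (Union a)
  have "{x \<in> topspace T. f x \<in> \<Union>(range a)} = (\<Union>i. {x \<in> topspace T. f x \<in> a i})" by auto
  moreover have "(\<Union>i. {x \<in> topspace T. f x \<in> a i}) \<in> sigma_sets (topspace T) {U. openin T U}"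
    by (rule sigma_sets.Union) (rule Union(2))
  ultimately show ?case by simp
qed

lemma borel_pw:
  assumes U: "U \<in> borel_sets_of (real_subspace X)" and k: "k \<ge> 1" and UX: "U \<subseteq> X"
  shows "pw k U \<in> borel_sets_of (power_space X k)"
proof -
  have eq: "pw k U = (\<Inter>i\<in>{..<k}. {t \<in> topspace (power_space X k). t i \<in> U})"
  proof (rule set_eqI)
    fix t
    have "0 \<in> {..<k}" using k by simp
    then have "t \<in> (\<Inter>i\<in>{..<k}. {t \<in> topspace (power_space X k). t i \<in> U}) \<longleftrightarrow>
       t \<in> topspace (power_space X k) \<and> (\<forall>i<k. t i \<in> U)" by blast
    moreover have "t \<in> pw k U \<longleftrightarrow> t \<in> topspace (power_space X k) \<and> (\<forall>i<k. t i \<in> U)"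
      using UX by (auto simp: pw_def PiE_iff)
    ultimately show "t \<in> pw k U \<longleftrightarrow> t \<in> (\<Inter>i\<in>{..<k}. {t \<in> topspace (power_space X k). t i \<in> U})" by simp
  qed
  have Asb: "{V. openin (power_space X k) V} \<subseteq> Pow (topspace (power_space X k))"
    using openin_subset by blast
  have "{t \<in> topspace (power_space X k). t i \<in> U} \<in> sigma_sets (topspace (power_space X k)) {V. openin (power_space X k) V}"
    if "i \<in> {..<k}" for i
  proof -
    have "continuous_map (power_space X k) (real_subspace X) (\<lambda>t. t i)"
      unfolding power_space_def real_subspace_def using that by (rule continuous_map_product_projection)
    moreover have "U \<in> sigma_sets (topspace (real_subspace X)) {V. openin (real_subspace X) V}"
      using U unfolding borel_sets_of_def .
    ultimately show ?thesis by (rule preimage_sigma)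
  qed
  moreover have "0 \<in> {..<k}" using k by simp
  then have "{..<k} \<noteq> {}" by blast
  ultimately show ?thesis unfolding eq borel_sets_of_def by (intro sigma_sets_INTER[OF Asb]) auto
qed

lemma bridge:
  assumes S: "Split Q L (power_space X k)" and k: "k \<ge> 1" and X: "X \<noteq> {}"
    and QC: "Q (power_space X k) (pw k ` C)"
    and LL: "\<And>V. L (power_space X k) V \<Longrightarrow> large_cover (power_space X k) V"
  shows "\<exists>D E. D \<union> E = C \<and> D \<inter> E = {} \<and> kcov X k D \<and> kcov X k E"
proof -
  obtain W1 W2 where W: "W1 \<union> W2 = pw k ` C" "W1 \<inter> W2 = {}"
    and "\<exists>V\<subseteq>W1. L (power_space X k) V" "\<exists>V\<subseteq>W2. L (power_space X k) V"
    using S[unfolded Split_def, rule_format, OF QC] by blast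
  then obtain V1 V2 where V: "V1 \<subseteq> W1" "L (power_space X k) V1" "V2 \<subseteq> W2" "L (power_space X k) V2"
    by blast
  define D where "D = {U\<in>C. pw k U \<in> W1}"
  define E where "E = C - D"
  have "V1 \<subseteq> pw k ` D"
  proof
    fix V assume "V \<in> V1"
    then have "V \<in> W1" "V \<in> pw k ` C" using V W by auto
    then show "V \<in> pw k ` D" unfolding D_def by blast
  qed
  moreover have "V2 \<subseteq> pw k ` E"
  proof
    fix V assume "V \<in> V2"
    then have "V \<in> W2" "V \<in> pw k ` C" using V W by auto
    then obtain U where "U \<in> C" "V = pw k U" by blast
    moreover have "V \<notin> W1" using \<open>V \<in> W2\<close> W(2) by blast
    ultimately show "V \<in> pw k ` E" unfolding E_def D_def by blast
  qed
  ultimately have "kcov X k D" "kcov X k E"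
    using kcov_from[OF LL[OF V(2)] _ k X] kcov_from[OF LL[OF V(4)] _ k X] by blast+
  moreover have "D \<union> E = C" "D \<inter> E = {}" unfolding E_def D_def by auto
  ultimately show ?thesis by blast
qed


lemma generic:
  assumes H: "\<forall>k\<ge>1. Split Q2 L (power_space X k)" and X: "X \<noteq> {}"
    and Qpw: "\<And>C k. Q1 (real_subspace X) C \<Longrightarrow> k \<ge> 1 \<Longrightarrow> Q2 (power_space X k) (pw k ` C)"
    and LL: "\<And>k V. L (power_space X k) V \<Longrightarrow> large_cover (power_space X k) V"
    and her: "\<And>C D. Q1 (real_subspace X) C \<Longrightarrow> D \<subseteq> C \<Longrightarrow> wc X D \<Longrightarrow> Q1 (real_subspace X) D"
    and wcQ: "\<And>C. Q1 (real_subspace X) C \<Longrightarrow> wc X C"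
  shows "Split Q1 Q1 (real_subspace X)"
  unfolding Split_def
proof (intro allI impI)
  fix U assume QU: "Q1 (real_subspace X) U"
  have "\<exists>A B. A \<union> B = U \<and> A \<inter> B = {} \<and> Q1 (real_subspace X) A \<and> Q1 (real_subspace X) B"
  proof (rule abstract[where P="Q1 (real_subspace X)" and X=X])
    fix C and k :: nat assume C: "Q1 (real_subspace X) C" and k: "1 \<le> k"
    show "\<exists>D E. D \<union> E = C \<and> D \<inter> E = {} \<and> kcov X k D \<and> kcov X k E"
      by (rule bridge[OF H[rule_format, OF k] k X Qpw[OF C k] LL])
  next
    fix C D assume "Q1 (real_subspace X) C" "D \<subseteq> C" "wc X D"
    then show "Q1 (real_subspace X) D" by (rule her)
  next
    fix C assume "Q1 (real_subspace X) C" then show "wc X C" by (rule wcQ)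
  next
    show "Q1 (real_subspace X) U" by (rule QU)
  qed
  then obtain A B where AB: "A \<union> B = U" "A \<inter> B = {}" "Q1 (real_subspace X) A" "Q1 (real_subspace X) B"
    by blast
  show "\<exists>U1 U2. U1 \<union> U2 = U \<and> U1 \<inter> U2 = {} \<and> (\<exists>V\<subseteq>U1. Q1 (real_subspace X) V) \<and> (\<exists>V\<subseteq>U2. Q1 (real_subspace X) V)"
    using AB by blast
qed

lemma open_pw: "openin (real_subspace X) U \<Longrightarrow> openin (power_space X k) (pw k U)"
  by (simp add: power_space_def pw_def openin_PiE real_subspace_def)

lemma closed_pw: "closedin (real_subspace X) U \<Longrightarrow> closedin (power_space X k) (pw k U)"
  by (simp add: power_space_def pw_def closedin_product_topology real_subspace_def)

lemma omega_sub: "omega_cover (real_subspace X) C \<Longrightarrow> U \<in> C \<Longrightarrow> U \<subseteq> X"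
  unfolding omega_cover_def is_cover_def by simp

lemma Omega_pw:
  assumes "Omega (real_subspace X) C" "k \<ge> 1"
  shows "Omega (power_space X k) (pw k ` C)"
proof -
  have oc: "omega_cover (real_subspace X) C" and op: "\<forall>U\<in>C. openin (real_subspace X) U"
    using assms(1) unfolding Omega_def by simp_all
  have "omega_cover (power_space X k) (pw k ` C)" by (rule omega_pw[OF oc assms(2)])
  moreover have "\<forall>W\<in>pw k ` C. openin (power_space X k) W" using op open_pw by blast
  ultimately show ?thesis unfolding Omega_def by simp
qed

lemma C_Omega_pw:
  assumes "C_Omega (real_subspace X) C" "k \<ge> 1"
  shows "C_Omega (power_space X k) (pw k ` C)"
proof -
  have oc: "omega_cover (real_subspace X) C" and ct: "countable C"
    and op: "\<forall>U\<in>C. openin (real_subspace X) U \<and> closedin (real_subspace X) U"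
    using assms(1) unfolding C_Omega_def by simp_all
  have "omega_cover (power_space X k) (pw k ` C)" by (rule omega_pw[OF oc assms(2)])
  moreover have "\<forall>W\<in>pw k ` C. openin (power_space X k) W \<and> closedin (power_space X k) W"
    using op open_pw closed_pw by blast
  moreover have "countable (pw k ` C)" using ct by simp
  ultimately show ?thesis unfolding C_Omega_def by simp
qed

lemma B_Omega_pw:
  assumes "B_Omega (real_subspace X) C" "k \<ge> 1"
  shows "B_Omega (power_space X k) (pw k ` C)"
proof -
  have oc: "omega_cover (real_subspace X) C" "countable C" "C \<subseteq> borel_sets_of (real_subspace X)"
    using assms(1) unfolding B_Omega_def by simp_all
  have "pw k U \<in> borel_sets_of (power_space X k)" if "U \<in> C" for U
  proof -
    have "U \<in> borel_sets_of (real_subspace X)" using oc(3) that by blast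
    then show ?thesis using assms(2) omega_sub[OF oc(1) that] by (rule borel_pw)
  qed
  then have "pw k ` C \<subseteq> borel_sets_of (power_space X k)" by blast
  moreover have "omega_cover (power_space X k) (pw k ` C)" by (rule omega_pw[OF oc(1) assms(2)])
  moreover have "countable (pw k ` C)" using oc(2) by simp
  ultimately show ?thesis unfolding B_Omega_def by simp
qed

lemma Omega_her:
  assumes "Omega (real_subspace X) C" "D \<subseteq> C" "wc X D"
  shows "Omega (real_subspace X) D"
proof -
  have oc: "omega_cover (real_subspace X) C" and op: "\<forall>U\<in>C. openin (real_subspace X) U"
    using assms(1) unfolding Omega_def by simp_all
  have "omega_cover (real_subspace X) D" by (rule omega_her[OF oc assms(2,3)])
  moreover have "\<forall>U\<in>D. openin (real_subspace X) U" using op assms(2) by blast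
  ultimately show ?thesis unfolding Omega_def by simp
qed

lemma C_Omega_her:
  assumes "C_Omega (real_subspace X) C" "D \<subseteq> C" "wc X D"
  shows "C_Omega (real_subspace X) D"
proof -
  have oc: "omega_cover (real_subspace X) C" and ct: "countable C"
    and op: "\<forall>U\<in>C. openin (real_subspace X) U \<and> closedin (real_subspace X) U"
    using assms(1) unfolding C_Omega_def by simp_all
  have "omega_cover (real_subspace X) D" by (rule omega_her[OF oc assms(2,3)])
  moreover have "\<forall>U\<in>D. openin (real_subspace X) U \<and> closedin (real_subspace X) U" using op assms(2) by blast
  moreover have "countable D" by (rule countable_subset[OF assms(2) ct])
  ultimately show ?thesis unfolding C_Omega_def by simp
qed

lemma B_Omega_her:
  assumes "B_Omega (real_subspace X) C" "D \<subseteq> C" "wc X D"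
  shows "B_Omega (real_subspace X) D"
proof -
  have oc: "omega_cover (real_subspace X) C" and ct: "countable C"
    and op: "C \<subseteq> borel_sets_of (real_subspace X)"
    using assms(1) unfolding B_Omega_def by simp_all
  have "omega_cover (real_subspace X) D" by (rule omega_her[OF oc assms(2,3)])
  moreover have "D \<subseteq> borel_sets_of (real_subspace X)" using op assms(2) by blast
  moreover have "countable D" by (rule countable_subset[OF assms(2) ct])
  ultimately show ?thesis unfolding B_Omega_def by simp
qed

lemma Omega_wc: "Omega (real_subspace X) C \<Longrightarrow> wc X C"
  unfolding Omega_def by (simp add: omega_wc)

lemma C_Omega_wc: "C_Omega (real_subspace X) C \<Longrightarrow> wc X C"
  unfolding C_Omega_def by (simp add: omega_wc)

lemma B_Omega_wc: "B_Omega (real_subspace X) C \<Longrightarrow> wc X C"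
  unfolding B_Omega_def by (simp add: omega_wc)

theorem theorem8p4:
  fixes X :: "real set"
  assumes "infinite X"
  shows "((\<forall>k\<ge>1. Split Omega Lambda (power_space X k)) \<longrightarrow> Split Omega Omega (real_subspace X))
       \<and> ((\<forall>k\<ge>1. Split C_Omega C_Lambda (power_space X k)) \<longrightarrow> Split C_Omega C_Omega (real_subspace X))
       \<and> ((\<forall>k\<ge>1. Split B_Omega B_Lambda (power_space X k)) \<longrightarrow> Split B_Omega B_Omega (real_subspace X))"
proof (intro conjI impI)
  have X: "X \<noteq> {}" using assms by auto
  {
    assume H: "\<forall>k\<ge>1. Split Omega Lambda (power_space X k)"
    show "Split Omega Omega (real_subspace X)"
      by (rule generic[of Omega Lambda X Omega, OF H X Omega_pw _ Omega_her Omega_wc]) (simp_all add: Lambda_def)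
  }
  {
    assume H: "\<forall>k\<ge>1. Split C_Omega C_Lambda (power_space X k)"
    show "Split C_Omega C_Omega (real_subspace X)"
      by (rule generic[of C_Omega C_Lambda X C_Omega, OF H X C_Omega_pw _ C_Omega_her C_Omega_wc]) (simp_all add: C_Lambda_def)
  }
  {
    assume H: "\<forall>k\<ge>1. Split B_Omega B_Lambda (power_space X k)"
    show "Split B_Omega B_Omega (real_subspace X)"
      by (rule generic[of B_Omega B_Lambda X B_Omega, OF H X B_Omega_pw _ B_Omega_her B_Omega_wc]) (simp_all add: B_Lambda_def)
  }
qed

end
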